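(* Let a product two-action game with $m$ players and characteristic tuple $(\underline v,\sigma^1,\dots,\sigma^m)$ be given. Let $\pi\in S_m$ with $F(\pi)\neq\emptyset$, and for $\underline\gamma\in EC(\pi)$ define the increment map $\mathrm{Inc}(\underline\gamma):F(\pi)\to\{0,1\}$ by $$\mathrm{Inc}(\underline\gamma,i):=\Bigl(1+\gamma^i+v_i+|L_0(\underline\gamma)\setminus\{i\}|+\sum_{j\in\mathcal A\setminus F(\pi)}\chi\bigl(\sigma^j(\pi(j)),\sigma^j(i)\bigr)\Bigr)\bmod 2,$$ where $\chi:\mathbb R\times\mathbb R\to\{0,1\}$ is given by $\chi(a,b)=1$ iff $a\ge b$. Then: (i) $\underline\gamma\in EC(\pi)$ is a Nash equilibrium if and only if $\mathrm{Inc}(\underline\gamma,i)=0$ for all $i\in F(\pi)$. (ii) Let $g(\pi)\in EC(\pi)$ be the point with $\gamma^i=1$ for all $i\in F(\pi)$. The map $\underline\gamma\mapsto\mathrm{Inc}(\underline\gamma)$ on $EC(\pi)$ takes only two values: the map $\mathrm{Inc}(g(\pi))$ and its opposite $i\mapsto (1+\mathrm{Inc}(g(\pi),i))\bmod 2$. Moreover $\mathrm{Inc}(\underline\gamma)=\mathrm{Inc}(g(\pi))$ if and only if $|L_0(\underline\gamma)|$ is even. (iii) Either $EC(\pi)$ contains no Nash equilibrium, or exactly half of its elements are Nash equilibria.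
   Context: Fix an integer $m\ge 1$ and $\mathcal A=\{1,\dots,m\}$. A two-action game is a finite game in normal form with player set $\mathcal A$ in which each player $i$ has exactly two pure strategies $s^i_0,s^i_1$, together with utility functions $U^i:S\to\mathbb R$, where $S=\prod_{i\in\mathcal A}\{s^i_0,s^i_1\}$. A mixed strategy combination is identified with $\underline\gamma=(\gamma^1,\dots,\gamma^m)\in[0,1]^m$, where $\gamma^i$ is the probability with which player $i$ plays $s^i_1$. The expected utility $V^i$ is the multilinear extension $V^i(\underline\gamma)=\sum_{(j_1,\dots,j_m)\in\{0,1\}^m}\prod_{k=1}^m p_k(j_k)\,U^i(s^1_{j_1},\dots,s^m_{j_m})$ with $p_k(1)=\gamma^k$, $p_k(0)=1-\gamma^k$. Write $\underline\gamma^{-i}=(\gamma^j)_{j\ne i}$ and $\lambda^i(\underline\gamma^{-i}):=V^i(\underline\gamma)|_{\gamma^i=1}-V^i(\underline\gamma)|_{\gamma^i=0}$. A Nash equilibrium is a point $\underline\gamma\in[0,1]^m$ such that for every $i$: $\lambda^i(\underline\gamma^{-i})=0$ if $0<\gamma^i<1$; $\lambda^i(\underline\gamma^{-i})\le 0$ if $\gamma^i=0$; $\lambda^i(\underline\gamma^{-i})\ge 0$ if $\gamma^i=1$. For $\underline\gamma$ put $L_0(\underline\gamma)=\{i:\gamma^i=0\}$, $L_1(\underline\gamma)=\{i:\gamma^i=1\}$, $L(\underline\gamma)=L_0(\underline\gamma)\cup L_1(\underline\gamma)$. A two-action game is a product two-action game if there exist $\underline v=(v_1,\dots,v_m)\in\{0,1\}^m$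 and numbers $a^i_j\in(0,1)$ for $i,j\in\mathcal A$, $i\ne j$, with $a^{i_1}_j\neq a^{i_2}_j$ whenever $i_1\neq i_2$ and both differ from $j$, such that $\lambda^i(\underline\gamma^{-i})=(-1)^{v_i}\prod_{j\in\mathcal A\setminus\{i\}}(\gamma^j-a^i_j)$ for every $i\in\mathcal A$. For $j\in\mathcal A$ the $j$-th associated permutation $\sigma^j\in S_m$ is the unique permutation with $\sigma^j(j)=j$ such that for $i,i'\in\mathcal A\setminus\{j\}$ one has $\sigma^j(i)<\sigma^j(i')$ iff $a^i_j>a^{i'}_j$. The tuple $(\underline v,\sigma^1,\dots,\sigma^m)$ is the characteristic tuple of the game. For $\pi\in S_m$, $F(\pi)=\{i\in\mathcal A:\pi(i)=i\}$ and $EC(\pi):=\{\underline\gamma\in[0,1]^m \mid L(\underline\gamma)=F(\pi),\ \gamma^j=a^{\pi(j)}_j \text{ for all } j\notin F(\pi)\}$. *)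

theory Defs
  imports Complex_Main "HOL-Library.FuncSet" "HOL-Combinatorics.Permutations"
begin

text \<open>A pure strategy profile is an extensional function
  {1..m} -> bool (True = strategy s_1). A mixed strategy combination is an
  extensional function {1..m} -> [0,1] (probability of s_1).\<close>

definition profiles :: "nat \<Rightarrow> (nat \<Rightarrow> bool) set" where
  "profiles m = PiE {1..m} (\<lambda>_. UNIV)"

definition mixed :: "nat \<Rightarrow> (nat \<Rightarrow> real) set" where
  "mixed m = PiE {1..m} (\<lambda>_. {0..1})"

definition exp_util :: "nat \<Rightarrow> (nat \<Rightarrow> (nat \<Rightarrow> bool) \<Rightarrow> real) \<Rightarrow> nat \<Rightarrow> (nat \<Rightarrow> real) \<Rightarrow> real" where
  "exp_util m U i \<gamma> =
     (\<Sum>s\<in>profiles m. (\<Prod>k\<in>{1..m}. if s k then \<gamma> k else 1 - \<gamma> k) * U i s)"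

definition lam :: "nat \<Rightarrow> (nat \<Rightarrow> (nat \<Rightarrow> bool) \<Rightarrow> real) \<Rightarrow> nat \<Rightarrow> (nat \<Rightarrow> real) \<Rightarrow> real" where
  "lam m U i \<gamma> = exp_util m U i (\<gamma>(i := 1)) - exp_util m U i (\<gamma>(i := 0))"

definition nash :: "nat \<Rightarrow> (nat \<Rightarrow> (nat \<Rightarrow> bool) \<Rightarrow> real) \<Rightarrow> (nat \<Rightarrow> real) \<Rightarrow> bool" where
  "nash m U \<gamma> \<longleftrightarrow> \<gamma> \<in> mixed m \<and>
     (\<forall>i\<in>{1..m}. (0 < \<gamma> i \<and> \<gamma> i < 1 \<longrightarrow> lam m U i \<gamma> = 0)
                \<and> (\<gamma> i = 0 \<longrightarrow> lam m U i \<gamma> \<le> 0)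
                \<and> (\<gamma> i = 1 \<longrightarrow> lam m U i \<gamma> \<ge> 0))"

definition L0 :: "nat \<Rightarrow> (nat \<Rightarrow> real) \<Rightarrow> nat set" where
  "L0 m \<gamma> = {i\<in>{1..m}. \<gamma> i = 0}"

definition L1 :: "nat \<Rightarrow> (nat \<Rightarrow> real) \<Rightarrow> nat set" where
  "L1 m \<gamma> = {i\<in>{1..m}. \<gamma> i = 1}"

definition Lset :: "nat \<Rightarrow> (nat \<Rightarrow> real) \<Rightarrow> nat set" where
  "Lset m \<gamma> = L0 m \<gamma> \<union> L1 m \<gamma>"

text \<open>Product two-action game with data v (values in {0,1}) and a i j = a^i_j.\<close>
definition product_game ::
  "nat \<Rightarrow> (nat \<Rightarrow> (nat \<Rightarrow> bool) \<Rightarrow> real) \<Rightarrow> (nat \<Rightarrow> nat) \<Rightarrow> (nat \<Rightarrow> nat \<Rightarrow> real) \<Rightarrow> bool" where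
  "product_game m U v a \<longleftrightarrow>
     (\<forall>i\<in>{1..m}. v i \<in> {0,1}) \<and>
     (\<forall>i\<in>{1..m}. \<forall>j\<in>{1..m}. i \<noteq> j \<longrightarrow> 0 < a i j \<and> a i j < 1) \<and>
     (\<forall>j\<in>{1..m}. \<forall>i1\<in>{1..m}. \<forall>i2\<in>{1..m}.
         i1 \<noteq> i2 \<and> i1 \<noteq> j \<and> i2 \<noteq> j \<longrightarrow> a i1 j \<noteq> a i2 j) \<and>
     (\<forall>i\<in>{1..m}. \<forall>\<gamma>\<in>mixed m.
         lam m U i \<gamma> = (-1) ^ v i * (\<Prod>j\<in>{1..m} - {i}. (\<gamma> j - a i j)))"

definition assoc_perm :: "nat \<Rightarrow> (nat \<Rightarrow> nat \<Rightarrow> real) \<Rightarrow> nat \<Rightarrow> (nat \<Rightarrow> nat) \<Rightarrow> bool" where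
  "assoc_perm m a j s \<longleftrightarrow> s permutes {1..m} \<and> s j = j \<and>
     (\<forall>i\<in>{1..m} - {j}. \<forall>i'\<in>{1..m} - {j}. s i < s i' \<longleftrightarrow> a i j > a i' j)"

definition fixpts :: "nat \<Rightarrow> (nat \<Rightarrow> nat) \<Rightarrow> nat set" where
  "fixpts m \<pi> = {i\<in>{1..m}. \<pi> i = i}"

definition EC :: "nat \<Rightarrow> (nat \<Rightarrow> nat \<Rightarrow> real) \<Rightarrow> (nat \<Rightarrow> nat) \<Rightarrow> (nat \<Rightarrow> real) set" where
  "EC m a \<pi> = {\<gamma>\<in>mixed m. Lset m \<gamma> = fixpts m \<pi> \<and>
                 (\<forall>j\<in>{1..m} - fixpts m \<pi>. \<gamma> j = a (\<pi> j) j)}"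

definition chi :: "nat \<Rightarrow> nat \<Rightarrow> nat" where
  "chi x y = (if x \<ge> y then 1 else 0)"

text \<open>Increment map; gamma^i (which lies in {0,1} for i in F(pi)) is read as the natural number nat (floor gamma^i).\<close>
definition Inc :: "nat \<Rightarrow> (nat \<Rightarrow> nat) \<Rightarrow> (nat \<Rightarrow> nat \<Rightarrow> nat) \<Rightarrow> (nat \<Rightarrow> nat) \<Rightarrow> (nat \<Rightarrow> real) \<Rightarrow> nat \<Rightarrow> nat" where
  "Inc m v \<sigma> \<pi> \<gamma> i =
     (1 + nat \<lfloor>\<gamma> i\<rfloor> + v i + card (L0 m \<gamma> - {i})
        + (\<Sum>j\<in>{1..m} - fixpts m \<pi>. chi (\<sigma> j (\<pi> j)) (\<sigma> j i))) mod 2"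

definition gpt :: "nat \<Rightarrow> (nat \<Rightarrow> nat \<Rightarrow> real) \<Rightarrow> (nat \<Rightarrow> nat) \<Rightarrow> nat \<Rightarrow> real" where
  "gpt m a \<pi> = (\<lambda>i\<in>{1..m}. if \<pi> i = i then 1 else a (\<pi> i) i)"

end

theory Submission
  imports Defs
begin

lemma pg_facts:
  assumes "product_game m U v a"
  shows "\<And>i. i\<in>{1..m} \<Longrightarrow> v i \<in> {0,1}"
    and "\<And>i j. i\<in>{1..m} \<Longrightarrow> j\<in>{1..m} \<Longrightarrow> i \<noteq> j \<Longrightarrow> 0 < a i j \<and> a i j < 1"
    and "\<And>j i1 i2. j\<in>{1..m} \<Longrightarrow> i1\<in>{1..m} \<Longrightarrow> i2\<in>{1..m} \<Longrightarrow> i1 \<noteq> i2 \<Longrightarrow> i1 \<noteq> j \<Longrightarrow> i2 \<noteq> j \<Longrightarrow> a i1 j \<noteq> a i2 j"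
    and "\<And>i \<gamma>. i\<in>{1..m} \<Longrightarrow> \<gamma>\<in>mixed m \<Longrightarrow> lam m U i \<gamma> = (-1) ^ v i * (\<Prod>j\<in>{1..m} - {i}. (\<gamma> j - a i j))"
  using assms unfolding product_game_def by blast+

lemma perm_facts:
  assumes "\<pi> permutes {1..m}"
  shows "\<And>j. j \<in> {1..m} \<Longrightarrow> \<pi> j \<in> {1..m}"
   and "\<And>j. j \<in> {1..m} - fixpts m \<pi> \<Longrightarrow> \<pi> j \<noteq> j"
   and "\<And>i j. i \<in> fixpts m \<pi> \<Longrightarrow> j \<in> {1..m} - fixpts m \<pi> \<Longrightarrow> \<pi> j \<noteq> i"
   and "fixpts m \<pi> \<subseteq> {1..m}"
proof -
  show "\<And>j. j \<in> {1..m} \<Longrightarrow> \<pi> j \<in> {1..m}" using assms by (metis permutes_in_image)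
  show "\<And>j. j \<in> {1..m} - fixpts m \<pi> \<Longrightarrow> \<pi> j \<noteq> j" by (auto simp: fixpts_def)
  show "fixpts m \<pi> \<subseteq> {1..m}" by (auto simp: fixpts_def)
  fix i j assume i: "i \<in> fixpts m \<pi>" and j: "j \<in> {1..m} - fixpts m \<pi>"
  show "\<pi> j \<noteq> i"
  proof
    assume "\<pi> j = i"
    with i have "\<pi> j = \<pi> i" by (simp add: fixpts_def)
    hence "j = i" using permutes_inj[OF assms] by (meson injD)
    with i j show False by simp
  qed
qed

lemma EC_iff:
  assumes pg: "product_game m U v a" and perm: "\<pi> permutes {1..m}"
  shows "\<gamma> \<in> EC m a \<pi> \<longleftrightarrow> \<gamma> \<in> mixed m \<and> (\<forall>i\<in>fixpts m \<pi>. \<gamma> i = 0 \<or> \<gamma> i = 1)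
        \<and> (\<forall>j\<in>{1..m} - fixpts m \<pi>. \<gamma> j = a (\<pi> j) j)"
proof
  assume "\<gamma> \<in> EC m a \<pi>"
  thus "\<gamma> \<in> mixed m \<and> (\<forall>i\<in>fixpts m \<pi>. \<gamma> i = 0 \<or> \<gamma> i = 1)
        \<and> (\<forall>j\<in>{1..m} - fixpts m \<pi>. \<gamma> j = a (\<pi> j) j)"
    unfolding EC_def Lset_def L0_def L1_def by blast
next
  assume H: "\<gamma> \<in> mixed m \<and> (\<forall>i\<in>fixpts m \<pi>. \<gamma> i = 0 \<or> \<gamma> i = 1)
        \<and> (\<forall>j\<in>{1..m} - fixpts m \<pi>. \<gamma> j = a (\<pi> j) j)"
  have "Lset m \<gamma> = fixpts m \<pi>"
  proof
    show "fixpts m \<pi> \<subseteq> Lset m \<gamma>" using H perm_facts(4)[OF perm] unfolding Lset_def L0_def L1_def by blast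
    show "Lset m \<gamma> \<subseteq> fixpts m \<pi>"
    proof
      fix i assume i: "i \<in> Lset m \<gamma>"
      hence iA: "i \<in> {1..m}" and g: "\<gamma> i = 0 \<or> \<gamma> i = 1" unfolding Lset_def L0_def L1_def by auto
      show "i \<in> fixpts m \<pi>"
      proof (rule ccontr)
        assume "i \<notin> fixpts m \<pi>"
        hence ij: "i \<in> {1..m} - fixpts m \<pi>" using iA by simp
        hence "\<gamma> i = a (\<pi> i) i" using H by blast
        moreover have "0 < a (\<pi> i) i \<and> a (\<pi> i) i < 1"
          using pg_facts(2)[OF pg] perm_facts(1,2)[OF perm] ij iA by blast
        ultimately show False using g by auto
      qed
    qed
  qed
  thus "\<gamma> \<in> EC m a \<pi>" using H unfolding EC_def by blast
qed

lemma L0_sub_fix: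
  assumes pg: "product_game m U v a" and perm: "\<pi> permutes {1..m}" and g: "\<gamma> \<in> EC m a \<pi>"
  shows "L0 m \<gamma> \<subseteq> fixpts m \<pi>" "finite (L0 m \<gamma>)"
  using g unfolding EC_def Lset_def by (auto simp: L0_def)

lemma lam_fixed:
  assumes pg: "product_game m U v a" and perm: "\<pi> permutes {1..m}"
    and sig: "\<forall>j\<in>{1..m}. assoc_perm m a j (\<sigma> j)"
    and g: "\<gamma> \<in> EC m a \<pi>" and i: "i \<in> fixpts m \<pi>"
  shows "\<exists>P>0. lam m U i \<gamma> = (-1) ^ (v i + card (L0 m \<gamma> - {i}) + (\<Sum>j\<in>{1..m} - fixpts m \<pi>. chi (\<sigma> j (\<pi> j)) (\<sigma> j i))) * P"
proof -
  let ?A = "{1..m}" let ?F = "fixpts m \<pi>"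
  have gi: "\<gamma> \<in> mixed m" "\<forall>k\<in>?F. \<gamma> k = 0 \<or> \<gamma> k = 1" "\<forall>j\<in>?A - ?F. \<gamma> j = a (\<pi> j) j"
    using g EC_iff[OF pg perm] by blast+
  have iA: "i \<in> ?A" using i by (simp add: fixpts_def)
  define f where "f j = \<gamma> j - a i j" for j
  define n where "n j = (if j \<in> ?F then (if \<gamma> j = 0 then 1 else 0) else chi (\<sigma> j (\<pi> j)) (\<sigma> j i))" for j
  have fac: "f j = (-1) ^ n j * \<bar>f j\<bar> \<and> \<bar>f j\<bar> > 0" if j: "j \<in> ?A - {i}" for j
  proof (cases "j \<in> ?F")
    case True
    have a: "0 < a i j \<and> a i j < 1" using pg_facts(2)[OF pg] iA j by blast
    show ?thesis using gi(2) True a by (auto simp: f_def n_def)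
  next
    case False
    hence jF: "j \<in> ?A - ?F" using j by simp
    have pj: "\<pi> j \<in> ?A" "\<pi> j \<noteq> j" "\<pi> j \<noteq> i" using perm_facts[OF perm] jF i by auto
    have ij: "i \<noteq> j" using j by simp
    have ne: "a (\<pi> j) j \<noteq> a i j" using pg_facts(3)[OF pg] jF pj iA ij by blast
    have ap: "assoc_perm m a j (\<sigma> j)" using sig jF by blast
    hence ord: "\<sigma> j (\<pi> j) < \<sigma> j i \<longleftrightarrow> a (\<pi> j) j > a i j"
      unfolding assoc_perm_def using pj iA ij by blast
    have "inj (\<sigma> j)" using ap unfolding assoc_perm_def by (blast intro: permutes_inj)
    hence sne: "\<sigma> j (\<pi> j) \<noteq> \<sigma> j i" using pj(3) by (meson injD)
    have fj: "f j = a (\<pi> j) j - a i j" using gi(3) jF by (simp add: f_def)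
    show ?thesis
    proof (cases "\<sigma> j (\<pi> j) < \<sigma> j i")
      case True
      then show ?thesis using ord fj False by (simp add: n_def chi_def)
    next
      case F2: False
      hence "a (\<pi> j) j < a i j" using ord ne by auto
      then show ?thesis using F2 fj False by (simp add: n_def chi_def)
    qed
  qed
  have lam: "lam m U i \<gamma> = (-1) ^ v i * prod f (?A - {i})"
    using pg_facts(4)[OF pg iA gi(1)] by (simp add: f_def)
  have "prod f (?A - {i}) = prod (\<lambda>j. (-1) ^ n j * \<bar>f j\<bar>) (?A - {i})"
    using fac by (intro prod.cong) auto
  also have "\<dots> = (-1) ^ (\<Sum>j\<in>?A - {i}. n j) * prod (\<lambda>j. \<bar>f j\<bar>) (?A - {i})"
    by (simp add: prod.distrib power_sum)
  finally have pf: "prod f (?A - {i}) = (-1) ^ (\<Sum>j\<in>?A - {i}. n j) * prod (\<lambda>j. \<bar>f j\<bar>) (?A - {i})" .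
  have Ppos: "prod (\<lambda>j. \<bar>f j\<bar>) (?A - {i}) > 0" using fac by (intro prod_pos) auto
  have split: "?A - {i} = (?F - {i}) \<union> (?A - ?F)" using perm_facts(4)[OF perm] i by auto
  have finF: "finite ?F" using perm_facts(4)[OF perm] finite_subset by blast
  have "(\<Sum>j\<in>?A - {i}. n j) = (\<Sum>j\<in>?F - {i}. n j) + (\<Sum>j\<in>?A - ?F. n j)"
    unfolding split using finF by (intro sum.union_disjoint) auto
  also have "(\<Sum>j\<in>?F - {i}. n j) = card (L0 m \<gamma> - {i})"
  proof -
    have "(\<Sum>j\<in>?F - {i}. n j) = (\<Sum>j\<in>?F - {i}. if \<gamma> j = 0 then 1 else 0)"
      by (rule sum.cong) (auto simp: n_def)
    also have "\<dots> = (\<Sum>j\<in>{j\<in>?F - {i}. \<gamma> j = 0}. 1::nat)"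
      using finF by (subst sum.inter_filter) auto
    also have "{j\<in>?F - {i}. \<gamma> j = 0} = L0 m \<gamma> - {i}"
      using L0_sub_fix[OF pg perm g] perm_facts(4)[OF perm] by (auto simp: L0_def)
    finally show ?thesis by (simp only: card_eq_sum)
  qed
  also have "(\<Sum>j\<in>?A - ?F. n j) = (\<Sum>j\<in>?A - ?F. chi (\<sigma> j (\<pi> j)) (\<sigma> j i))"
    by (rule sum.cong) (auto simp: n_def)
  finally have N: "(\<Sum>j\<in>?A - {i}. n j) = card (L0 m \<gamma> - {i}) + (\<Sum>j\<in>?A - ?F. chi (\<sigma> j (\<pi> j)) (\<sigma> j i))" .
  have "lam m U i \<gamma> = (-1) ^ v i * ((-1) ^ (card (L0 m \<gamma> - {i}) + (\<Sum>j\<in>?A - ?F. chi (\<sigma> j (\<pi> j)) (\<sigma> j i))) * prod (\<lambda>j. \<bar>f j\<bar>) (?A - {i}))"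
    unfolding lam pf N by simp
  also have "\<dots> = (-1) ^ (v i + card (L0 m \<gamma> - {i}) + (\<Sum>j\<in>?A - ?F. chi (\<sigma> j (\<pi> j)) (\<sigma> j i))) * prod (\<lambda>j. \<bar>f j\<bar>) (?A - {i})"
    by (simp only: power_add mult.assoc add.assoc)
  finally show ?thesis using Ppos by blast
qed


lemma lam_nonfixed:
  assumes pg: "product_game m U v a" and perm: "\<pi> permutes {1..m}"
    and g: "\<gamma> \<in> EC m a \<pi>" and j: "j \<in> {1..m} - fixpts m \<pi>"
  shows "lam m U j \<gamma> = 0"
proof -
  have gi: "\<gamma> \<in> mixed m" "\<forall>j\<in>{1..m} - fixpts m \<pi>. \<gamma> j = a (\<pi> j) j"
    using g EC_iff[OF pg perm] by blast+
  define k where "k = inv \<pi> j"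
  have pk: "\<pi> k = j" using permutes_inverses(1)[OF perm] by (simp add: k_def)
  have kA: "k \<in> {1..m}" using j permutes_in_image[OF permutes_inv[OF perm]] by (simp add: k_def)
  have kj: "k \<noteq> j" using pk j by (auto simp: fixpts_def)
  have kF: "k \<in> {1..m} - fixpts m \<pi>" using pk kj kA by (auto simp: fixpts_def)
  have "\<gamma> k - a j k = 0" using gi(2) kF pk by simp
  hence "(\<Prod>i\<in>{1..m} - {j}. (\<gamma> i - a j i)) = 0"
    using kA kj by (intro prod_zero) auto
  thus ?thesis using pg_facts(4)[OF pg _ gi(1)] j by simp
qed

lemma nash_iff:
  assumes pg: "product_game m U v a" and perm: "\<pi> permutes {1..m}"
    and sig: "\<forall>j\<in>{1..m}. assoc_perm m a j (\<sigma> j)"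
    and g: "\<gamma> \<in> EC m a \<pi>"
  shows "nash m U \<gamma> \<longleftrightarrow> (\<forall>i\<in>fixpts m \<pi>. Inc m v \<sigma> \<pi> \<gamma> i = 0)"
proof -
  let ?A = "{1..m}" let ?F = "fixpts m \<pi>"
  define C where "C i \<longleftrightarrow> (0 < \<gamma> i \<and> \<gamma> i < 1 \<longrightarrow> lam m U i \<gamma> = 0)
                \<and> (\<gamma> i = 0 \<longrightarrow> lam m U i \<gamma> \<le> 0)
                \<and> (\<gamma> i = 1 \<longrightarrow> lam m U i \<gamma> \<ge> 0)" for i
  have gi: "\<gamma> \<in> mixed m" "\<forall>k\<in>?F. \<gamma> k = 0 \<or> \<gamma> k = 1" "\<forall>j\<in>?A - ?F. \<gamma> j = a (\<pi> j) j"
    using g EC_iff[OF pg perm] by blast+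
  have nf: "C j" if "j \<in> ?A - ?F" for j
  proof -
    have "0 < a (\<pi> j) j \<and> a (\<pi> j) j < 1"
      using pg_facts(2)[OF pg] perm_facts(1,2)[OF perm] that by blast
    thus ?thesis using lam_nonfixed[OF pg perm g that] gi(3) that by (auto simp: C_def)
  qed
  have fx: "C i \<longleftrightarrow> Inc m v \<sigma> \<pi> \<gamma> i = 0" if i: "i \<in> ?F" for i
  proof -
    define E where "E = v i + card (L0 m \<gamma> - {i}) + (\<Sum>j\<in>?A - ?F. chi (\<sigma> j (\<pi> j)) (\<sigma> j i))"
    obtain P :: real where P: "P > 0" "lam m U i \<gamma> = (-1) ^ E * P"
      using lam_fixed[OF pg perm sig g i] unfolding E_def by blast
    have Inc: "Inc m v \<sigma> \<pi> \<gamma> i = (1 + nat \<lfloor>\<gamma> i\<rfloor> + E) mod 2"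
      unfolding Inc_def E_def by (simp add: add.assoc)
    have lp: "lam m U i \<gamma> > 0 \<longleftrightarrow> even E" "lam m U i \<gamma> < 0 \<longleftrightarrow> odd E"
      using P by (cases "even E"; simp)+
    have ln: "lam m U i \<gamma> \<noteq> 0" using P by simp
    show ?thesis
    proof (cases "\<gamma> i = 0")
      case True
      have c: "C i \<longleftrightarrow> lam m U i \<gamma> \<le> 0" unfolding C_def using True by simp
      have "Inc m v \<sigma> \<pi> \<gamma> i = (1 + E) mod 2" using Inc True by simp
      moreover have "(1 + E) mod 2 = 0 \<longleftrightarrow> odd E" by presburger
      ultimately show ?thesis using c lp ln by linarith
    next
      case False
      hence g1: "\<gamma> i = 1" using gi(2) i by blast
      have c: "C i \<longleftrightarrow> lam m U i \<gamma> \<ge> 0" unfolding C_def using g1 by simp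
      have "Inc m v \<sigma> \<pi> \<gamma> i = (2 + E) mod 2" using Inc g1 by simp
      moreover have "(2 + E) mod 2 = 0 \<longleftrightarrow> even E" by presburger
      ultimately show ?thesis using c lp ln by linarith
    qed
  qed
  have "nash m U \<gamma> \<longleftrightarrow> (\<forall>i\<in>?A. C i)" unfolding nash_def C_def using gi(1) by blast
  also have "\<dots> \<longleftrightarrow> (\<forall>i\<in>?F. C i)" using nf perm_facts(4)[OF perm] by blast
  also have "\<dots> \<longleftrightarrow> (\<forall>i\<in>?F. Inc m v \<sigma> \<pi> \<gamma> i = 0)" using fx by blast
  finally show ?thesis .
qed

lemma gpt_facts:
  assumes pg: "product_game m U v a" and perm: "\<pi> permutes {1..m}"
  shows "gpt m a \<pi> \<in> EC m a \<pi>" "L0 m (gpt m a \<pi>) = {}"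
    "\<And>i. i \<in> fixpts m \<pi> \<Longrightarrow> gpt m a \<pi> i = 1"
proof -
  have av: "0 < a (\<pi> j) j \<and> a (\<pi> j) j < 1" if "j \<in> {1..m} - fixpts m \<pi>" for j
    using pg_facts(2)[OF pg] perm_facts(1,2)[OF perm] that by blast
  show "\<And>i. i \<in> fixpts m \<pi> \<Longrightarrow> gpt m a \<pi> i = 1" by (auto simp: gpt_def fixpts_def)
  have "gpt m a \<pi> \<in> mixed m" unfolding mixed_def gpt_def restrict_PiE_iff
  proof
    fix i assume i: "i \<in> {1..m}"
    show "(if \<pi> i = i then 1 else a (\<pi> i) i) \<in> {0..1}"
      using av[of i] i by (auto simp: fixpts_def)
  qed
  moreover have "\<forall>j\<in>{1..m} - fixpts m \<pi>. gpt m a \<pi> j = a (\<pi> j) j"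
    by (auto simp: gpt_def fixpts_def)
  moreover have "\<forall>i\<in>fixpts m \<pi>. gpt m a \<pi> i = 0 \<or> gpt m a \<pi> i = 1"
    by (auto simp: gpt_def fixpts_def)
  ultimately show "gpt m a \<pi> \<in> EC m a \<pi>" using EC_iff[OF pg perm] by blast
  show "L0 m (gpt m a \<pi>) = {}"
  proof -
    have "gpt m a \<pi> j \<noteq> 0" if "j \<in> {1..m}" for j
      using av[of j] that by (auto simp: gpt_def fixpts_def)
    thus ?thesis by (auto simp: L0_def)
  qed
qed

lemma par2: "(2 + x + (c::nat) + S) mod 2 = ((2 + x + S) mod 2 + c) mod 2"
  by (simp add: mod_simps add_ac)
lemma par1: "(c::nat) \<ge> 1 \<Longrightarrow> (1 + x + (c - 1) + S) mod 2 = ((2 + x + S) mod 2 + c) mod 2"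
proof -
  assume "c \<ge> 1" then obtain d where d: "c = Suc d" by (cases c) auto
  have "((2 + x + S) mod 2 + c) mod 2 = (2 + x + c + S) mod 2" by (rule par2[symmetric])
  also have "2 + x + c + S = (1 + x + (c - 1) + S) + 2" using d by simp
  finally show ?thesis by simp
qed

lemma Inc_rel:
  assumes pg: "product_game m U v a" and perm: "\<pi> permutes {1..m}"
    and g: "\<gamma> \<in> EC m a \<pi>" and i: "i \<in> fixpts m \<pi>"
  shows "Inc m v \<sigma> \<pi> \<gamma> i = (Inc m v \<sigma> \<pi> (gpt m a \<pi>) i + card (L0 m \<gamma>)) mod 2"
proof -
  define S where "S = (\<Sum>j\<in>{1..m} - fixpts m \<pi>. chi (\<sigma> j (\<pi> j)) (\<sigma> j i))"
  have G: "Inc m v \<sigma> \<pi> (gpt m a \<pi>) i = (2 + v i + S) mod 2"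
    unfolding Inc_def S_def using gpt_facts[OF pg perm] i by simp
  have gi: "\<gamma> i = 0 \<or> \<gamma> i = 1" using g EC_iff[OF pg perm] i by blast
  have iA: "i \<in> {1..m}" using i by (simp add: fixpts_def)
  have fin: "finite (L0 m \<gamma>)" using L0_sub_fix[OF pg perm g] by blast
  show ?thesis
  proof (cases "\<gamma> i = 0")
    case True
    hence iL: "i \<in> L0 m \<gamma>" using iA by (simp add: L0_def)
    hence c: "card (L0 m \<gamma> - {i}) = card (L0 m \<gamma>) - 1" "card (L0 m \<gamma>) \<ge> 1"
      using fin by (auto simp: Suc_le_eq card_gt_0_iff)
    have "Inc m v \<sigma> \<pi> \<gamma> i = (1 + v i + (card (L0 m \<gamma>) - 1) + S) mod 2"
      unfolding Inc_def S_def using True c by simp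
    thus ?thesis unfolding G using par1[OF c(2)] by simp
  next
    case False
    hence g1: "\<gamma> i = 1" using gi by blast
    hence "i \<notin> L0 m \<gamma>" by (simp add: L0_def)
    hence c: "card (L0 m \<gamma> - {i}) = card (L0 m \<gamma>)" by simp
    have "Inc m v \<sigma> \<pi> \<gamma> i = (2 + v i + card (L0 m \<gamma>) + S) mod 2"
      unfolding Inc_def S_def using g1 c by simp
    thus ?thesis unfolding G using par2 by simp
  qed
qed


lemma par3: "(x::nat) < 2 \<Longrightarrow> (x + c) mod 2 = x \<Longrightarrow> even c" by presburger
lemma par4: "((y::nat) + c0) mod 2 = 0 \<Longrightarrow> ((y + c) mod 2 = 0 \<longleftrightarrow> even (c + c0))" by presburger

lemma par5: "(c::nat) mod 2 = 1 \<Longrightarrow> (y + c) mod 2 = (1 + y) mod 2" by presburger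

lemma flip:
  assumes pg: "product_game m U v a" and perm: "\<pi> permutes {1..m}"
    and g: "\<gamma> \<in> EC m a \<pi>" and i0: "i0 \<in> fixpts m \<pi>"
  shows "\<gamma>(i0 := 1 - \<gamma> i0) \<in> EC m a \<pi>"
    "(\<gamma>(i0 := 1 - \<gamma> i0))(i0 := 1 - (\<gamma>(i0 := 1 - \<gamma> i0)) i0) = \<gamma>"
    "even (card (L0 m (\<gamma>(i0 := 1 - \<gamma> i0)))) \<longleftrightarrow> odd (card (L0 m \<gamma>))"
proof -
  let ?g = "\<gamma>(i0 := 1 - \<gamma> i0)"
  have gi: "\<gamma> \<in> mixed m" "\<forall>k\<in>fixpts m \<pi>. \<gamma> k = 0 \<or> \<gamma> k = 1" "\<forall>j\<in>{1..m} - fixpts m \<pi>. \<gamma> j = a (\<pi> j) j"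
    using g EC_iff[OF pg perm] by blast+
  have iA: "i0 \<in> {1..m}" using i0 by (simp add: fixpts_def)
  have g01: "\<gamma> i0 = 0 \<or> \<gamma> i0 = 1" using gi(2) i0 by blast
  have "?g \<in> mixed m" using gi(1) iA g01 unfolding mixed_def PiE_iff extensional_def by auto
  moreover have "\<forall>k\<in>fixpts m \<pi>. ?g k = 0 \<or> ?g k = 1" using gi(2) g01 by auto
  moreover have "\<forall>j\<in>{1..m} - fixpts m \<pi>. ?g j = a (\<pi> j) j" using gi(3) i0 by auto
  ultimately show "?g \<in> EC m a \<pi>" using EC_iff[OF pg perm] by blast
  show "?g(i0 := 1 - ?g i0) = \<gamma>" by auto
  have fin: "finite (L0 m \<gamma>)" using L0_sub_fix[OF pg perm g] by blast
  show "even (card (L0 m ?g)) \<longleftrightarrow> odd (card (L0 m \<gamma>))"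
  proof (cases "\<gamma> i0 = 0")
    case True
    have L: "L0 m ?g = L0 m \<gamma> - {i0}" using True by (auto simp: L0_def)
    have iL: "i0 \<in> L0 m \<gamma>" using True iA by (simp add: L0_def)
    hence "card (L0 m \<gamma>) = Suc (card (L0 m \<gamma> - {i0}))" using fin
      by (metis card_Suc_Diff1)
    thus ?thesis unfolding L by simp
  next
    case False
    hence g1: "\<gamma> i0 = 1" using g01 by blast
    have L: "L0 m ?g = insert i0 (L0 m \<gamma>)" using g1 iA by (auto simp: L0_def)
    have "i0 \<notin> L0 m \<gamma>" using g1 by (simp add: L0_def)
    thus ?thesis unfolding L using fin by simp
  qed
qed

theorem theorem3p7:
  fixes m :: nat and U :: "nat \<Rightarrow> (nat \<Rightarrow> bool) \<Rightarrow> real"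
    and v :: "nat \<Rightarrow> nat" and a :: "nat \<Rightarrow> nat \<Rightarrow> real"
    and \<sigma> :: "nat \<Rightarrow> nat \<Rightarrow> nat" and \<pi> :: "nat \<Rightarrow> nat"
  assumes "m \<ge> 1"
    and "product_game m U v a"
    and "\<forall>j\<in>{1..m}. assoc_perm m a j (\<sigma> j)"
    and "\<pi> permutes {1..m}"
    and "fixpts m \<pi> \<noteq> {}"
  shows "(\<forall>\<gamma>\<in>EC m a \<pi>. nash m U \<gamma> \<longleftrightarrow> (\<forall>i\<in>fixpts m \<pi>. Inc m v \<sigma> \<pi> \<gamma> i = 0))
    \<and> gpt m a \<pi> \<in> EC m a \<pi>
    \<and> (\<forall>\<gamma>\<in>EC m a \<pi>.
          (\<forall>i\<in>fixpts m \<pi>. Inc m v \<sigma> \<pi> \<gamma> i = Inc m v \<sigma> \<pi> (gpt m a \<pi>) i)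
        \<or> (\<forall>i\<in>fixpts m \<pi>. Inc m v \<sigma> \<pi> \<gamma> i = (1 + Inc m v \<sigma> \<pi> (gpt m a \<pi>) i) mod 2))
    \<and> (\<forall>\<gamma>\<in>EC m a \<pi>.
          (\<forall>i\<in>fixpts m \<pi>. Inc m v \<sigma> \<pi> \<gamma> i = Inc m v \<sigma> \<pi> (gpt m a \<pi>) i)
          \<longleftrightarrow> even (card (L0 m \<gamma>)))
    \<and> finite (EC m a \<pi>)
    \<and> ((\<forall>\<gamma>\<in>EC m a \<pi>. \<not> nash m U \<gamma>)
        \<or> 2 * card {\<gamma>\<in>EC m a \<pi>. nash m U \<gamma>} = card (EC m a \<pi>))"
proof -
  note pg = assms(2) and sig = assms(3) and perm = assms(4)
  let ?E = "EC m a \<pi>" let ?F = "fixpts m \<pi>" let ?G = "gpt m a \<pi>"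
  let ?I = "\<lambda>\<gamma> i. Inc m v \<sigma> \<pi> \<gamma> i"
  obtain i0 where i0: "i0 \<in> ?F" using assms(5) by blast
  have P1: "\<forall>\<gamma>\<in>?E. nash m U \<gamma> \<longleftrightarrow> (\<forall>i\<in>?F. ?I \<gamma> i = 0)"
    using nash_iff[OF pg perm sig] by blast
  have P2: "?G \<in> ?E" using gpt_facts[OF pg perm] by blast
  have rel: "?I \<gamma> i = (?I ?G i + card (L0 m \<gamma>)) mod 2" if "\<gamma> \<in> ?E" "i \<in> ?F" for \<gamma> i
    using Inc_rel[OF pg perm that] .
  have Glt: "?I ?G i < 2" for i by (simp add: Inc_def)
  have P4: "(\<forall>i\<in>?F. ?I \<gamma> i = ?I ?G i) \<longleftrightarrow> even (card (L0 m \<gamma>))" if g: "\<gamma> \<in> ?E" for \<gamma>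
  proof
    assume "\<forall>i\<in>?F. ?I \<gamma> i = ?I ?G i"
    hence "(?I ?G i0 + card (L0 m \<gamma>)) mod 2 = ?I ?G i0" using rel[OF g i0] i0 by simp
    thus "even (card (L0 m \<gamma>))" using Glt[of i0] par3 by blast
  next
    assume "even (card (L0 m \<gamma>))"
    thus "\<forall>i\<in>?F. ?I \<gamma> i = ?I ?G i" using rel[OF g] Glt by auto
  qed
  have P3: "(\<forall>i\<in>?F. ?I \<gamma> i = ?I ?G i) \<or> (\<forall>i\<in>?F. ?I \<gamma> i = (1 + ?I ?G i) mod 2)"
    if g: "\<gamma> \<in> ?E" for \<gamma>
  proof (cases "even (card (L0 m \<gamma>))")
    case True thus ?thesis using P4[OF g] by blast
  next
    case False
    hence "card (L0 m \<gamma>) mod 2 = 1" by presburger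
    hence "?I \<gamma> i = (1 + ?I ?G i) mod 2" if "i \<in> ?F" for i
      using rel[OF g that] par5 by simp
    thus ?thesis by blast
  qed
  have P5: "finite ?E"
  proof (rule finite_subset)
    show "?E \<subseteq> PiE {1..m} (\<lambda>j. {0, 1, a (\<pi> j) j})"
    proof
      fix \<gamma> assume g: "\<gamma> \<in> ?E"
      have gi: "\<gamma> \<in> mixed m" "\<forall>k\<in>?F. \<gamma> k = 0 \<or> \<gamma> k = 1" "\<forall>j\<in>{1..m} - ?F. \<gamma> j = a (\<pi> j) j"
        using g EC_iff[OF pg perm] by blast+
      show "\<gamma> \<in> PiE {1..m} (\<lambda>j. {0, 1, a (\<pi> j) j})"
        using gi unfolding mixed_def PiE_iff by blast
    qed
    show "finite (PiE {1..m} (\<lambda>j. {0, 1, a (\<pi> j) j}))" by (rule finite_PiE) auto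
  qed
  have P6: "(\<forall>\<gamma>\<in>?E. \<not> nash m U \<gamma>) \<or> 2 * card {\<gamma>\<in>?E. nash m U \<gamma>} = card ?E"
  proof (cases "\<forall>\<gamma>\<in>?E. \<not> nash m U \<gamma>")
    case True thus ?thesis by blast
  next
    case False
    then obtain \<gamma>0 where g0: "\<gamma>0 \<in> ?E" "nash m U \<gamma>0" by blast
    define c0 where "c0 = card (L0 m \<gamma>0)"
    have z: "(?I ?G i + c0) mod 2 = 0" if "i \<in> ?F" for i
    proof -
      have "?I \<gamma>0 i = 0" using P1 g0 that by blast
      thus ?thesis using rel[OF g0(1) that] unfolding c0_def by simp
    qed
    have N: "nash m U \<gamma> \<longleftrightarrow> even (card (L0 m \<gamma>) + c0)" if g: "\<gamma> \<in> ?E" for \<gamma>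
    proof -
      have A1: "nash m U \<gamma> \<longleftrightarrow> (\<forall>i\<in>?F. ?I \<gamma> i = 0)" using bspec[OF P1 g] .
      have A2: "?I \<gamma> i = 0 \<longleftrightarrow> even (card (L0 m \<gamma>) + c0)" if "i \<in> ?F" for i
      proof -
        have "?I \<gamma> i = (?I ?G i + card (L0 m \<gamma>)) mod 2" by (rule rel[OF g that])
        thus ?thesis using par4[OF z[OF that], of "card (L0 m \<gamma>)"] by simp
      qed
      show ?thesis unfolding A1 using A2 i0 by auto
    qed
    define A where "A = {\<gamma>\<in>?E. even (card (L0 m \<gamma>) + c0)}"
    define B where "B = {\<gamma>\<in>?E. odd (card (L0 m \<gamma>) + c0)}"
    define \<phi> where "\<phi> \<gamma> = \<gamma>(i0 := 1 - \<gamma> i0)" for \<gamma> :: "nat \<Rightarrow> real"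
    have fl: "\<phi> \<gamma> \<in> ?E" "\<phi> (\<phi> \<gamma>) = \<gamma>" "even (card (L0 m (\<phi> \<gamma>))) \<longleftrightarrow> odd (card (L0 m \<gamma>))"
      if "\<gamma> \<in> ?E" for \<gamma>
      using flip[OF pg perm that i0] unfolding \<phi>_def by blast+
    have "bij_betw \<phi> A B"
    proof (rule bij_betw_byWitness[where f' = \<phi>])
      show "\<forall>x\<in>A. \<phi> (\<phi> x) = x" using fl unfolding A_def by blast
      show "\<forall>x\<in>B. \<phi> (\<phi> x) = x" using fl unfolding B_def by blast
      show "\<phi> ` A \<subseteq> B"
      proof
        fix y assume "y \<in> \<phi> ` A"
        then obtain x where x: "x \<in> A" "y = \<phi> x" by blast
        hence xe: "x \<in> ?E" "even (card (L0 m x) + c0)" unfolding A_def by blast+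
        have "odd (card (L0 m y) + c0)" using fl(3)[OF xe(1)] xe(2) x(2) by presburger
        thus "y \<in> B" using fl(1)[OF xe(1)] x(2) unfolding B_def by blast
      qed
      show "\<phi> ` B \<subseteq> A"
      proof
        fix y assume "y \<in> \<phi> ` B"
        then obtain x where x: "x \<in> B" "y = \<phi> x" by blast
        hence xe: "x \<in> ?E" "odd (card (L0 m x) + c0)" unfolding B_def by blast+
        have "even (card (L0 m y) + c0)" using fl(3)[OF xe(1)] xe(2) x(2) by presburger
        thus "y \<in> A" using fl(1)[OF xe(1)] x(2) unfolding A_def by blast
      qed
    qed
    hence cAB: "card A = card B" by (rule bij_betw_same_card)
    have "?E = A \<union> B" unfolding A_def B_def by blast
    moreover have "A \<inter> B = {}" unfolding A_def B_def by blast
    moreover have "finite A" "finite B" using P5 unfolding A_def B_def by simp_all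
    ultimately have "card ?E = card A + card B" by (simp add: card_Un_disjoint)
    moreover have "{\<gamma>\<in>?E. nash m U \<gamma>} = A" unfolding A_def using N by blast
    ultimately show ?thesis using cAB by simp
  qed
  show ?thesis using P1 P2 P3 P4 P5 P6 by blast
qed

end
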